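(* Let $G$ be a group acting properly by isometries on a metric space $X$ and let $H\le G$. Suppose there exist a map $\phi\colon G\to G$, a constant $\theta\ge0$ and a point $x\in X$ such that (CQ1) for all $u,v\in G$, if $\phi(u)H=\phi(v)H$ then $d(\phi(u)x,\phi(v)x)\le\theta$; and (CQ2) for all $u\in G$, $d(ux,\phi(u)x)\le\theta$. Then $\omega_G=\omega_{G/H}$.
   Context: Proper means $B_G(x,r)=\{g\in G: d(x,gx)\le r\}$ is finite for all $x,r$. For $o\in X$: $\omega_G=\limsup_{r\to\infty}\frac1r\log|B_G(o,r)|$ and $\omega_{G/H}=\limsup_{r\to\infty}\frac1r\log|\mathcal L(B_G(o,r))|$, where $\mathcal L\colon G\to G/H$ is the natural map to left cosets; these do not depend on $o$. *)

theory Defs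
  imports "HOL-Algebra.Coset" "HOL-Analysis.Analysis"
begin

definition isometric_action :: "('g, 'm) monoid_scheme \<Rightarrow> ('g \<Rightarrow> 'x::metric_space \<Rightarrow> 'x) \<Rightarrow> bool" where
  "isometric_action G act \<longleftrightarrow>
     act \<one>\<^bsub>G\<^esub> = id \<and>
     (\<forall>g\<in>carrier G. \<forall>h\<in>carrier G. act (g \<otimes>\<^bsub>G\<^esub> h) = act g \<circ> act h) \<and>
     (\<forall>g\<in>carrier G. \<forall>y z. dist (act g y) (act g z) = dist y z)"

definition orbit_ball :: "('g, 'm) monoid_scheme \<Rightarrow> ('g \<Rightarrow> 'x::metric_space \<Rightarrow> 'x) \<Rightarrow> 'x \<Rightarrow> real \<Rightarrow> 'g set" where
  "orbit_ball G act x r = {g \<in> carrier G. dist x (act g x) \<le> r}"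

definition proper_action :: "('g, 'm) monoid_scheme \<Rightarrow> ('g \<Rightarrow> 'x::metric_space \<Rightarrow> 'x) \<Rightarrow> bool" where
  "proper_action G act \<longleftrightarrow> (\<forall>x r. finite (orbit_ball G act x r))"

definition growth_exp :: "(real \<Rightarrow> nat) \<Rightarrow> ereal" where
  "growth_exp f = Limsup at_top (\<lambda>r. ereal (ln (real (f r)) / r))"

definition omega_G :: "('g, 'm) monoid_scheme \<Rightarrow> ('g \<Rightarrow> 'x::metric_space \<Rightarrow> 'x) \<Rightarrow> 'x \<Rightarrow> ereal" where
  "omega_G G act p = growth_exp (\<lambda>r. card (orbit_ball G act p r))"

text \<open>cosets gH are the left cosets g <# H; the natural map L g = g <# H\<close>
definition omega_quot :: "('g, 'm) monoid_scheme \<Rightarrow> 'g set \<Rightarrow> ('g \<Rightarrow> 'x::metric_space \<Rightarrow> 'x) \<Rightarrow> 'x \<Rightarrow> ereal" where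
  "omega_quot G H act p = growth_exp (\<lambda>r. card ((\<lambda>g. g <#\<^bsub>G\<^esub> H) ` orbit_ball G act p r))"

end

theory Submission
  imports Defs
begin

lemma ln_nat_nonneg: "0 \<le> ln (real (n::nat))"
  by (cases "n = 0") auto

lemma growth_le:
  fixes f g :: "real \<Rightarrow> nat" and K :: nat and c :: real
  assumes K: "K \<ge> 1" and c: "c \<ge> 0" and le: "\<And>r. r \<ge> 0 \<Longrightarrow> f r \<le> K * g (r + c)"
  shows "growth_exp f \<le> growth_exp g"
proof (rule ccontr)
  define A where "A = growth_exp g"
  have "eventually (\<lambda>r. 0 \<le> ereal (ln (real (g r)) / r)) at_top"
    using eventually_ge_at_top[of "0::real"] by eventually_elim (simp add: ln_nat_nonneg)
  then have "0 \<le> Liminf at_top (\<lambda>r. ereal (ln (real (g r)) / r))" by (rule Liminf_bounded)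
  also have "\<dots> \<le> A" unfolding A_def growth_exp_def by (rule Liminf_le_Limsup) simp
  finally have A0: "0 \<le> A" .
  assume "\<not> growth_exp f \<le> growth_exp g"
  then have "A < growth_exp f" unfolding A_def by simp
  then obtain z where z1: "A < ereal z" and z2: "ereal z < growth_exp f" using ereal_dense2 by blast
  then obtain y where y1: "A < ereal y" and y2: "ereal y < ereal z" using ereal_dense2 by blast
  have yz: "y < z" using y2 by simp
  have "(0::ereal) < ereal y" using A0 y1 by (rule le_less_trans)
  then have y0: "0 < y" by simp
  have "eventually (\<lambda>s. ereal (ln (real (g s)) / s) < ereal y) at_top"
    using y1 unfolding A_def growth_exp_def by (rule Limsup_lessD)
  then obtain N where N: "\<And>s. s \<ge> N \<Longrightarrow> ln (real (g s)) / s < y"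
    by (auto simp: eventually_at_top_linorder)
  define R where "R = max (max N 1) ((ln (real K) + y * c) / (z - y) + 1)"
  have "eventually (\<lambda>r. ereal (ln (real (f r)) / r) \<le> ereal z) at_top"
    using eventually_ge_at_top[of R]
  proof eventually_elim
    case (elim r)
    have r1: "r \<ge> 1" and rN: "r + c \<ge> N" and rR: "r > (ln (real K) + y * c) / (z - y)"
      using elim c unfolding R_def by auto
    show ?case
    proof (cases "f r = 0")
      case True then show ?thesis using y0 yz by simp
    next
      case False
      have fle: "f r \<le> K * g (r + c)" using le r1 by simp
      then have g1: "g (r + c) \<ge> 1" using False by (cases "g (r+c) = 0") auto
      have "ln (real (f r)) \<le> ln (real K * real (g (r + c)))"
        using fle False K g1 by (subst ln_le_cancel_iff) (auto simp flip: of_nat_mult)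
      also have "\<dots> = ln (real K) + ln (real (g (r + c)))"
        using K g1 by (simp add: ln_mult)
      also have "ln (real (g (r + c))) < y * (r + c)"
        using N[OF rN] r1 c by (simp add: divide_less_eq)
      finally have lf: "ln (real (f r)) < ln (real K) + y * c + y * r" by (simp add: algebra_simps)
      have "ln (real K) + y * c < (z - y) * r" using rR yz by (simp add: divide_less_eq mult.commute)
      with lf have "ln (real (f r)) < z * r" by (simp add: algebra_simps)
      then show ?thesis using r1 by (simp add: divide_le_eq)
    qed
  qed
  then have "growth_exp f \<le> ereal z" unfolding growth_exp_def by (rule Limsup_bounded)
  with z2 show False by simp
qed

theorem mainTheorem7:
  fixes G :: "('g, 'm) monoid_scheme" and act :: "'g \<Rightarrow> 'x::metric_space \<Rightarrow> 'x"
    and H :: "'g set" and \<phi> :: "'g \<Rightarrow> 'g" and \<theta> :: real and x p :: 'x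
  assumes "group G"
    and "isometric_action G act"
    and "proper_action G act"
    and "subgroup H G"
    and "\<phi> \<in> carrier G \<rightarrow> carrier G"
    and "\<theta> \<ge> 0"
    and CQ1: "\<And>u v. u \<in> carrier G \<Longrightarrow> v \<in> carrier G \<Longrightarrow>
              \<phi> u <#\<^bsub>G\<^esub> H = \<phi> v <#\<^bsub>G\<^esub> H \<Longrightarrow> dist (act (\<phi> u) x) (act (\<phi> v) x) \<le> \<theta>"
    and CQ2: "\<And>u. u \<in> carrier G \<Longrightarrow> dist (act u x) (act (\<phi> u) x) \<le> \<theta>"
  shows "omega_G G act p = omega_quot G H act p"
proof -
  interpret group G by fact
  note ia = assms(2)[unfolded isometric_action_def]
  have act1: "act \<one>\<^bsub>G\<^esub> y = y" for y using ia by simp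
  have actm: "act (g \<otimes>\<^bsub>G\<^esub> h) y = act g (act h y)" if "g \<in> carrier G" "h \<in> carrier G" for g h y
    using ia that by simp
  have iso: "dist (act g y) (act g z) = dist y z" if "g \<in> carrier G" for g y z
    using ia that by simp
  have fin: "finite (orbit_ball G act q s)" for q s
    using assms(3) unfolding proper_action_def by simp
  define D where "D = dist p x"
  have shift: "dist q (act g q) \<le> 2 * D + dist q' (act g q')"
    if "g \<in> carrier G" "dist q q' = D" for g q q'
  proof -
    have "dist q (act g q) \<le> dist q q' + dist q' (act g q') + dist (act g q') (act g q)"
      by (meson dist_triangle order_trans add_right_mono)
    also have "\<dots> = 2 * D + dist q' (act g q')"
      using iso[OF that(1)] that(2) by (simp add: dist_commute)
    finally show ?thesis .
  qed
  have sub_px: "orbit_ball G act p s \<subseteq> orbit_ball G act x (s + 2 * D)" for s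
    using shift[of _ x p] unfolding orbit_ball_def by (force simp: D_def dist_commute)
  have sub_xp: "orbit_ball G act x s \<subseteq> orbit_ball G act p (s + 2 * D)" for s
    using shift[of _ p x] unfolding orbit_ball_def by (force simp: D_def dist_commute)
  have phiC: "\<phi> u \<in> carrier G" if "u \<in> carrier G" for u using assms(5) that by auto
  define K where "K = card (orbit_ball G act x (3 * \<theta>))"
  have K1: "K \<ge> 1"
  proof -
    have "\<one>\<^bsub>G\<^esub> \<in> orbit_ball G act x (3 * \<theta>)" using assms(6) by (simp add: orbit_ball_def act1)
    then show ?thesis unfolding K_def using fin[of x "3*\<theta>"] by (metis card_0_eq empty_iff less_one not_le)
  qed
  define c where "c = 4 * D + \<theta>"
  have c0: "c \<ge> 0" using assms(6) by (simp add: c_def D_def)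
  have main: "card (orbit_ball G act p r) \<le> K * card ((\<lambda>g. g <#\<^bsub>G\<^esub> H) ` orbit_ball G act p (r + c))" for r
  proof -
    define S where "S = orbit_ball G act p r"
    define F where "F = (\<lambda>g. g <#\<^bsub>G\<^esub> H) ` orbit_ball G act p (r + c)"
    define fib where "fib C = {u \<in> S. \<phi> u <#\<^bsub>G\<^esub> H = C}" for C
    have "S \<subseteq> (\<Union>C\<in>F. fib C)"
    proof
      fix u assume u: "u \<in> S"
      then have uC: "u \<in> carrier G" and "u \<in> orbit_ball G act x (r + 2 * D)"
        using sub_px unfolding S_def orbit_ball_def by auto
      then have "dist x (act u x) \<le> r + 2 * D" unfolding orbit_ball_def by auto
      moreover have "dist x (act (\<phi> u) x) \<le> dist x (act u x) + dist (act u x) (act (\<phi> u) x)"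
        by (rule dist_triangle)
      ultimately have "dist x (act (\<phi> u) x) \<le> r + 2 * D + \<theta>" using CQ2[OF uC] by linarith
      then have "\<phi> u \<in> orbit_ball G act x (r + 2 * D + \<theta>)" using phiC[OF uC] by (simp add: orbit_ball_def)
      then have "\<phi> u \<in> orbit_ball G act p (r + c)" using sub_xp[of "r + 2 * D + \<theta>"]
        by (auto simp: c_def algebra_simps)
      then show "u \<in> (\<Union>C\<in>F. fib C)" using u unfolding F_def fib_def by auto
    qed
    have finF: "finite F" unfolding F_def using fin by simp
    have fibK: "card (fib C) \<le> K" for C
    proof (cases "fib C = {}")
      case True then show ?thesis by simp
    next
      case False
      then obtain v where v: "v \<in> fib C" by auto
      then have vC: "v \<in> carrier G" unfolding fib_def S_def orbit_ball_def by auto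
      have "fib C \<subseteq> (\<lambda>k. v \<otimes>\<^bsub>G\<^esub> k) ` orbit_ball G act x (3 * \<theta>)"
      proof
        fix u assume u: "u \<in> fib C"
        then have uC: "u \<in> carrier G" unfolding fib_def S_def orbit_ball_def by auto
        have eq: "\<phi> u <#\<^bsub>G\<^esub> H = \<phi> v <#\<^bsub>G\<^esub> H" using u v unfolding fib_def by auto
        have "dist (act u x) (act v x) \<le> dist (act u x) (act (\<phi> u) x) + dist (act (\<phi> u) x) (act (\<phi> v) x) + dist (act (\<phi> v) x) (act v x)"
          by (meson dist_triangle order_trans add_right_mono)
        also have "\<dots> \<le> 3 * \<theta>" using CQ2[OF uC] CQ2[OF vC] CQ1[OF uC vC eq] by (simp add: dist_commute)
        finally have d3: "dist (act u x) (act v x) \<le> 3 * \<theta>" .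
        define k where "k = inv\<^bsub>G\<^esub> v \<otimes>\<^bsub>G\<^esub> u"
        have kC: "k \<in> carrier G" using uC vC by (simp add: k_def)
        have vk: "v \<otimes>\<^bsub>G\<^esub> k = u" using uC vC by (simp add: k_def m_assoc[symmetric])
        have "dist x (act k x) = dist (act v x) (act v (act k x))" using iso[OF vC] by simp
        also have "\<dots> = dist (act v x) (act u x)" using actm[OF vC kC] vk by simp
        finally have "k \<in> orbit_ball G act x (3 * \<theta>)" using kC d3 by (simp add: orbit_ball_def dist_commute)
        then show "u \<in> (\<lambda>k. v \<otimes>\<^bsub>G\<^esub> k) ` orbit_ball G act x (3 * \<theta>)" using vk by force
      qed
      then have "card (fib C) \<le> card ((\<lambda>k. v \<otimes>\<^bsub>G\<^esub> k) ` orbit_ball G act x (3 * \<theta>))"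
        using fin by (intro card_mono) auto
      also have "\<dots> \<le> K" unfolding K_def by (rule card_image_le[OF fin])
      finally show ?thesis .
    qed
    have "card S \<le> card (\<Union>C\<in>F. fib C)"
      using \<open>S \<subseteq> _\<close> finF fin unfolding fib_def S_def by (intro card_mono) auto
    also have "\<dots> \<le> (\<Sum>C\<in>F. card (fib C))" by (rule card_UN_le[OF finF])
    also have "\<dots> \<le> (\<Sum>C\<in>F. K)" by (intro sum_mono fibK)
    also have "\<dots> = K * card F" by simp
    finally show ?thesis unfolding S_def F_def .
  qed
  have le1: "omega_G G act p \<le> omega_quot G H act p"
    unfolding omega_G_def omega_quot_def
    by (rule growth_le[OF K1 c0], rule main)
  have le2: "omega_quot G H act p \<le> omega_G G act p"
    unfolding omega_G_def omega_quot_def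
    by (rule growth_le[of 1 0]) (auto intro: card_image_le fin)
  show ?thesis using le1 le2 by simp
qed

end
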